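(* Let $\lambda$ be an uncountable strong limit cardinal of countable cofinality, let $\dot U$ be a unary predicate symbol, let $\varphi(v_1,\dots,v_n)$ be an $\mathcal{L}_{\in}(\dot U)$-formula and let $\alpha_1,\dots,\alpha_n<\lambda$. Then the set $\{(z_1,z_2)\in\mathsf{BC}_\lambda\times{}^{\lambda}2: (\lambda,\in_{z_1},U_{z_2})\models\varphi(\alpha_1,\dots,\alpha_n)\}$ is $\lambda$-Borel in $\mathsf{BC}_\lambda\times{}^{\lambda}2$.
   Context: Fix a bijective ordinal pairing function $\langle\cdot,\cdot\rangle:\lambda\times\lambda\to\lambda$. For $z\in{}^{\lambda}2$, $E_z$ (also written $\in_z$) is the binary relation on $\lambda$ with $\alpha\,E_z\,\beta$ iff $z(\langle\alpha,\beta\rangle)=0$, and $U_z=\{\alpha<\lambda: z(\alpha)=1\}$. If $(\lambda,E_z)$ is extensional and well-founded, $\pi_z$ is its transitive collapse. $\mathsf{BC}_\lambda$ is the set of $z$ such that $(\lambda,E_z)$ is extensional and well-founded and for each $b\in H_\lambda$, if $\pi_z^{-1}(b)$ exists then its set of $E_z$-predecessors is bounded in $\lambda$. ${}^{\lambda}2$ has the bounded topology (basic open sets $N_s=\{x:s\subseteq x\}$, $s\in{}^{\alpha}2$, $\alpha<\lambda$); a set is $\lambda$-Borel in a space if it belongs to the smallest $\lambda^+$-algebra containing the open sets of that space (here the subspace topology on $\mathsf{BC}_\lambda\times{}^{\lambda}2$). *)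

theory Defs
  imports Main "HOL-Library.Countable_Set"
begin

text \<open>The cardinal lambda is represented by a type 'a together with a cardinal
  well-order r on UNIV (so the elements of lambda are exactly the elements of 'a,
  ordered by r). Elements of the space of functions lambda to 2 are z :: 'a \<Rightarrow> bool,
  with True read as 1 and False as 0.\<close>

definition strong_limit_card :: "'a rel \<Rightarrow> bool" where
  "strong_limit_card r \<longleftrightarrow>
     (\<forall>A :: 'a set. ordLess2 (card_of A) r \<longrightarrow> ordLess2 (card_of (Pow A)) r)"

definition countable_cofinality :: "'a rel \<Rightarrow> bool" where
  "countable_cofinality r \<longleftrightarrow> (\<exists>C. countable C \<and> (\<forall>a. \<exists>c\<in>C. (a, c) \<in> r))"

definition ord_less :: "'a rel \<Rightarrow> 'a \<Rightarrow> 'a \<Rightarrow> bool" where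
  "ord_less r b a \<longleftrightarrow> (b, a) \<in> r \<and> b \<noteq> a"

definition Erel :: "('a \<times> 'a \<Rightarrow> 'a) \<Rightarrow> ('a \<Rightarrow> bool) \<Rightarrow> 'a rel" where
  "Erel pr z = {(a, b). \<not> z (pr (a, b))}"

definition Uset :: "('a \<Rightarrow> bool) \<Rightarrow> 'a set" where
  "Uset z = {a. z a}"

definition extensional_rel :: "'a rel \<Rightarrow> bool" where
  "extensional_rel E \<longleftrightarrow> (\<forall>a b. (\<forall>c. (c, a) \<in> E \<longleftrightarrow> (c, b) \<in> E) \<longrightarrow> a = b)"

text \<open>For a node x of the extensional well-founded (lambda, E_z), its
  collapse pi_z(x) lies in H_lambda iff its transitive closure has size < lambda; the
  transitive closure of pi_z(x) is the (injective) collapse image of the set of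
  E_z^+-predecessors of x. So the condition "for each b in H_lambda, if pi_z^{-1}(b)
  exists then its set of E_z-predecessors is bounded" reads as follows.\<close>
definition BC :: "'a rel \<Rightarrow> ('a \<times> 'a \<Rightarrow> 'a) \<Rightarrow> ('a \<Rightarrow> bool) set" where
  "BC r pr = {z. extensional_rel (Erel pr z) \<and> wf (Erel pr z) \<and>
     (\<forall>x. ordLess2 (card_of {y. (y, x) \<in> (Erel pr z)\<^sup>+}) r \<longrightarrow>
          (\<exists>g. \<forall>y. (y, x) \<in> Erel pr z \<longrightarrow> ord_less r y g))}"

definition Nbasic :: "'a rel \<Rightarrow> 'a \<Rightarrow> ('a \<Rightarrow> bool) \<Rightarrow> ('a \<Rightarrow> bool) set" where
  "Nbasic r \<alpha> s = {x. \<forall>b. ord_less r b \<alpha> \<longrightarrow> x b = s b}"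

definition prod_open :: "'a rel \<Rightarrow> (('a \<Rightarrow> bool) \<times> ('a \<Rightarrow> bool)) set \<Rightarrow> bool" where
  "prod_open r W \<longleftrightarrow> (\<forall>p\<in>W. \<exists>\<alpha> s \<beta> t.
      p \<in> Nbasic r \<alpha> s \<times> Nbasic r \<beta> t \<and> Nbasic r \<alpha> s \<times> Nbasic r \<beta> t \<subseteq> W)"

inductive_set lam_Borel :: "'a rel \<Rightarrow> (('a \<Rightarrow> bool) \<times> ('a \<Rightarrow> bool)) set
    \<Rightarrow> (('a \<Rightarrow> bool) \<times> ('a \<Rightarrow> bool)) set set"
  for r X where
  rel_open: "prod_open r W \<Longrightarrow> W \<inter> X \<in> lam_Borel r X"
| compl: "A \<in> lam_Borel r X \<Longrightarrow> X - A \<in> lam_Borel r X"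
| union: "(\<And>A. A \<in> F \<Longrightarrow> A \<in> lam_Borel r X) \<Longrightarrow> ordLeq2 (card_of F) r \<Longrightarrow> \<Union>F \<in> lam_Borel r X"

datatype fm = Mem nat nat | Eq nat nat | Upred nat | Neg fm | Conj fm fm | Ex nat fm

fun sat :: "'a rel \<Rightarrow> 'a set \<Rightarrow> (nat \<Rightarrow> 'a) \<Rightarrow> fm \<Rightarrow> bool" where
  "sat E U v (Mem i j) \<longleftrightarrow> (v i, v j) \<in> E"
| "sat E U v (Eq i j) \<longleftrightarrow> v i = v j"
| "sat E U v (Upred i) \<longleftrightarrow> v i \<in> U"
| "sat E U v (Neg \<phi>) \<longleftrightarrow> \<not> sat E U v \<phi>"
| "sat E U v (Conj \<phi> \<psi>) \<longleftrightarrow> sat E U v \<phi> \<and> sat E U v \<psi>"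
| "sat E U v (Ex i \<phi>) \<longleftrightarrow> (\<exists>a. sat E U (v(i := a)) \<phi>)"

end

theory Submission
  imports Defs
begin

unbundle cardinal_syntax

lemma exists_above:
  assumes r: "Card_order r" and F: "Field r = UNIV" and inf: "infinite (UNIV::'a set)"
  shows "\<exists>d. ord_less r (c::'a) d"
proof (rule ccontr)
  assume "\<not> ?thesis"
  hence all: "\<forall>d. (c,d) \<notin> r \<or> d = c" by (auto simp: ord_less_def)
  have wo: "Well_order r" using r by (simp add: card_order_on_def)
  have ro: "refl_on UNIV r \<and> total_on UNIV r" using wo F
    by (simp add: well_order_on_def linear_order_on_def partial_order_on_def preorder_on_def)
  have tot: "\<forall>y. (y,c) \<in> r"
  proof
    fix y
    show "(y,c) \<in> r"
    proof (cases "y = c")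
      case True then show ?thesis using ro by (simp add: refl_on_def)
    next
      case False
      from ro have "(y,c) \<in> r \<or> (c,y) \<in> r" using False by (simp add: total_on_def)
      then show ?thesis using all False by auto
    qed
  qed
  have eq: "UNIV = underS r c \<union> {c}"
    using tot by (auto simp: underS_def)
  have iso: "r =o |(UNIV::'a set)|" using ordIso_symmetric[OF card_of_Field_ordIso[OF r]] F by simp
  have l1: "|underS r c| <o |(UNIV::'a set)|"
    using card_of_underS[OF r] F ordLess_ordIso_trans iso by fastforce
  have l2: "|{c}| <o |(UNIV::'a set)|"
    by (rule finite_ordLess_infinite) (simp_all add: card_of_well_order_on Field_card_of inf)
  have "|underS r c \<union> {c}| <o |(UNIV::'a set)|"
    using card_of_Un_ordLess_infinite[OF _ l1 l2] inf by simp
  then have "|(UNIV::'a set)| <o |(UNIV::'a set)|" by (simp only: eq[symmetric])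
  then show False using ordLess_irreflexive by blast
qed

lemma open_coord:
  assumes "\<exists>d. ord_less r c d"
  shows "prod_open r {p. P ((if k then fst p else snd p) c)}"
  unfolding prod_open_def
proof
  fix p assume p: "p \<in> {p. P ((if k then fst p else snd p) c)}"
  obtain d where d: "ord_less r c d" using assms by blast
  show "\<exists>\<alpha> s \<beta> t. p \<in> Nbasic r \<alpha> s \<times> Nbasic r \<beta> t \<and>
          Nbasic r \<alpha> s \<times> Nbasic r \<beta> t \<subseteq> {p. P ((if k then fst p else snd p) c)}"
    apply (rule exI[of _ d], rule exI[of _ "fst p"], rule exI[of _ d], rule exI[of _ "snd p"])
    using p d by (cases p) (auto simp: Nbasic_def)
qed

lemma open_UNIV: "prod_open r UNIV"
  unfolding prod_open_def
proof
  fix p :: "('a\<Rightarrow>bool)\<times>('a\<Rightarrow>bool)"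
  show "\<exists>\<alpha> s \<beta> t. p \<in> Nbasic r \<alpha> s \<times> Nbasic r \<beta> t \<and> Nbasic r \<alpha> s \<times> Nbasic r \<beta> t \<subseteq> UNIV"
    by (rule exI[of _ undefined], rule exI[of _ "fst p"], rule exI[of _ undefined], rule exI[of _ "snd p"])
       (cases p, auto simp: Nbasic_def)
qed

lemma lemma3_gen:
  assumes r: "Card_order r" and F: "Field r = UNIV" and inf: "infinite (UNIV::'a set)"
  shows "{(z1, z2). z1 \<in> BC r pr \<and> sat (Erel pr z1) (Uset z2) (v::nat\<Rightarrow>'a) \<phi>}
           \<in> lam_Borel r (BC r pr \<times> UNIV)"
proof (induction \<phi> arbitrary: v)
  case (Mem i j)
  have "{(z1, z2). z1 \<in> BC r pr \<and> sat (Erel pr z1) (Uset z2) v (Mem i j)}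
      = {p. (\<lambda>x. \<not> x) ((if True then fst p else snd p) (pr (v i, v j)))} \<inter> (BC r pr \<times> UNIV)"
    by (auto simp: Erel_def)
  then show ?case using lam_Borel.rel_open[OF open_coord[where P="\<lambda>x. \<not>x" and k=True and c="pr (v i, v j)", OF exists_above[OF r F inf]], where X="BC r pr \<times> UNIV"] by (simp only:)
next
  case (Upred i)
  have "{(z1, z2). z1 \<in> BC r pr \<and> sat (Erel pr z1) (Uset z2) v (Upred i)}
      = {p. (\<lambda>x. x) ((if False then fst p else snd p) (v i))} \<inter> (BC r pr \<times> UNIV)"
    by (auto simp: Uset_def)
  then show ?case using lam_Borel.rel_open[OF open_coord[where P="\<lambda>x. x" and k=False and c="v i", OF exists_above[OF r F inf]], where X="BC r pr \<times> UNIV"] by (simp only:)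
next
  case (Eq i j)
  show ?case
  proof (cases "v i = v j")
    case True
    then have "{(z1, z2). z1 \<in> BC r pr \<and> sat (Erel pr z1) (Uset z2) v (Eq i j)}
      = UNIV \<inter> (BC r pr \<times> UNIV)" by auto
    then show ?thesis using lam_Borel.rel_open[OF open_UNIV, where X="BC r pr \<times> UNIV"] by (simp only:)
  next
    case False
    then have "{(z1, z2). z1 \<in> BC r pr \<and> sat (Erel pr z1) (Uset z2) v (Eq i j)}
      = (BC r pr \<times> UNIV) - UNIV \<inter> (BC r pr \<times> UNIV)" by auto
    then show ?thesis using lam_Borel.compl[OF lam_Borel.rel_open[OF open_UNIV, where X="BC r pr \<times> UNIV"]] by (simp only:)
  qed
next
  case (Neg \<phi>)
  have "{(z1, z2). z1 \<in> BC r pr \<and> sat (Erel pr z1) (Uset z2) v (Neg \<phi>)}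
     = (BC r pr \<times> UNIV) - {(z1, z2). z1 \<in> BC r pr \<and> sat (Erel pr z1) (Uset z2) v \<phi>}" by auto
  then show ?case using lam_Borel.compl[OF Neg.IH] by (simp only:)
next
  case (Conj \<phi> \<psi>)
  let ?X = "BC r pr \<times> (UNIV::('a\<Rightarrow>bool) set)"
  let ?A = "{(z1, z2). z1 \<in> BC r pr \<and> sat (Erel pr z1) (Uset z2) v \<phi>}"
  let ?B = "{(z1, z2). z1 \<in> BC r pr \<and> sat (Erel pr z1) (Uset z2) v \<psi>}"
  have fin: "|{?X - ?A, ?X - ?B}| \<le>o r"
  proof -
    have "|{?X - ?A, ?X - ?B}| <o |(UNIV::'a set)|"
      by (rule finite_ordLess_infinite) (simp_all add: card_of_well_order_on Field_card_of inf)
    moreover have "|(UNIV::'a set)| =o r" using card_of_Field_ordIso[OF r] F by simp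
    ultimately show ?thesis using ordLess_ordIso_trans ordLess_imp_ordLeq by blast
  qed
  have u: "\<Union>{?X - ?A, ?X - ?B} \<in> lam_Borel r ?X"
    apply (rule lam_Borel.union[OF _ fin])
    using lam_Borel.compl[OF Conj.IH(1)] lam_Borel.compl[OF Conj.IH(2)] by blast
  have "{(z1, z2). z1 \<in> BC r pr \<and> sat (Erel pr z1) (Uset z2) v (Conj \<phi> \<psi>)}
     = ?X - \<Union>{?X - ?A, ?X - ?B}" by auto
  then show ?case using lam_Borel.compl[OF u] by (simp only:)
next
  case (Ex i \<phi>)
  let ?f = "\<lambda>a. {(z1, z2). z1 \<in> BC r pr \<and> sat (Erel pr z1) (Uset z2) (v(i:=a)) \<phi>}"
  have c: "|range ?f| \<le>o r"
  proof -
    have "|range ?f| \<le>o |(UNIV::'a set)|" by (rule card_of_image)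
    moreover have "|(UNIV::'a set)| =o r" using card_of_Field_ordIso[OF r] F by simp
    ultimately show ?thesis using ordLeq_ordIso_trans by blast
  qed
  have u: "\<Union>(range ?f) \<in> lam_Borel r (BC r pr \<times> UNIV)"
    apply (rule lam_Borel.union[OF _ c]) using Ex.IH by blast
  have "{(z1, z2). z1 \<in> BC r pr \<and> sat (Erel pr z1) (Uset z2) v (Ex i \<phi>)} = \<Union>(range ?f)"
    by auto
  then show ?case using u by simp
qed

theorem lemma3:
  fixes r :: "'a rel" and pr :: "'a \<times> 'a \<Rightarrow> 'a" and \<phi> :: fm and v :: "nat \<Rightarrow> 'a"
  assumes "Card_order r" and "Field r = UNIV"
    and "\<not> countable (UNIV :: 'a set)"
    and "strong_limit_card r"
    and "countable_cofinality r"
    and "bij pr"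
  shows "{(z1, z2). z1 \<in> BC r pr \<and> sat (Erel pr z1) (Uset z2) v \<phi>}
           \<in> lam_Borel r (BC r pr \<times> UNIV)"
  using lemma3_gen[OF assms(1,2)] assms(3) countable_finite by blast

end
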